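(* Let $f:\mathbb{R}^n\to\mathbb{R}$ be convex and $L$-smooth (i.e. $\nabla f$ is $L$-Lipschitz with respect to $\|\cdot\|_2$), and suppose $f$ attains its global minimum value $f^*$ at some point of $\mathbb{R}^n_+$; let $z\in\mathbb{R}^n_+$ be any such minimizer. Let $x_0\in\mathbb{R}^n_{++}$ and define $$\alpha_k=\min\left\{\frac{f(x_k)-f^*}{2\|\nabla f(x_k)\|^2_{x_k}},\ \frac{1.79}{\|\nabla f(x_k)\|_\infty}\right\}$$ and either $x_{k+1}=x_k\circ\exp(-\alpha_k\nabla f(x_k))$ (entropic mirror descent) or $x_{k+1}=x_k\circ(\mathbf{1}-\alpha_k\nabla f(x_k)+\alpha_k^2\nabla f(x_k)^2)$ (Hadamard descent+), with the sequence kept constant once $\nabla f(x_k)=0$. Then in both cases $(x_k)$ is bounded, $\alpha_k\ge \big(8L(D_h(z,x_0)+\|z\|_1)\big)^{-1}$, and for all $k\ge0$ $$\min_{0\le i\le k} f(x_i)-f^*\le\frac{16L\,D_h(z,x_0)\,\big(D_h(z,x_0)+\|z\|_1\big)}{k+1};$$ moreover $(x_k)$ converges to a minimizer of $f$ lying in $\mathbb{R}^n_+$.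
   Context: $\mathbb{R}^n_+$, $\mathbb{R}^n_{++}$ are the nonnegative and strictly positive orthants; $\circ$, $\exp$ and squares act componentwise; $\mathbf{1}$ the all-ones vector; $\|v\|_x^2=\sum_i x_iv_i^2$. $h(x)=\sum_i x_i(\log x_i-1)$ (with $0\log0=0$) and $D_h(x,y)=\sum_i\big(x_i\log\frac{x_i}{y_i}-x_i+y_i\big)$ for $x\in\mathbb{R}^n_+$, $y\in\mathbb{R}^n_{++}$. *)

theory Defs
  imports "HOL-Analysis.Analysis"
begin

definition wnorm2 :: "real^'n \<Rightarrow> real^'n \<Rightarrow> real" where
  "wnorm2 x v = (\<Sum>i\<in>UNIV. x$i * (v$i)^2)"

definition norm1 :: "real^'n \<Rightarrow> real" where
  "norm1 v = (\<Sum>i\<in>UNIV. \<bar>v$i\<bar>)"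

text \<open>Bregman divergence of h(x) = sum x_i (log x_i - 1), with 0 log 0 = 0.\<close>
definition Dh :: "real^'n \<Rightarrow> real^'n \<Rightarrow> real" where
  "Dh x y = (\<Sum>i\<in>UNIV. (if x$i = 0 then 0 else x$i * ln (x$i / y$i)) - x$i + y$i)"

text \<open>Step size alpha_k (meaningful when the gradient is nonzero).\<close>
definition step_size :: "real \<Rightarrow> real \<Rightarrow> real^'n \<Rightarrow> real^'n \<Rightarrow> real" where
  "step_size fx fstar x gx =
     min ((fx - fstar) / (2 * wnorm2 x gx)) (1.79 / infnorm gx)"

definition emd_update :: "real \<Rightarrow> real^'n \<Rightarrow> real^'n \<Rightarrow> real^'n" where
  "emd_update a x gx = (\<chi> i. x$i * exp (- a * gx$i))"

definition hdp_update :: "real \<Rightarrow> real^'n \<Rightarrow> real^'n \<Rightarrow> real^'n" where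
  "hdp_update a x gx = (\<chi> i. x$i * (1 - a * gx$i + a^2 * (gx$i)^2))"

end

theory Submission
  imports Defs "HOL-Analysis.Analysis"
begin

lemma exp179: "exp (1.79::real) \<le> 1 + 1.79 + 1.79^2"
proof -
  define P where "P = (\<Sum>m<10. ((1.79::real) ^ m) / fact m)"
  define c where "c = (1.79::real) ^ 10 / fact 10"
  obtain t where t: "\<bar>t\<bar> \<le> \<bar>1.79::real\<bar>" and e: "exp (1.79::real) = P + exp t * c"
    using Maclaurin_exp_le[of "1.79::real" 10] unfolding P_def c_def by auto
  have c0: "c \<ge> 0" unfolding c_def by simp
  have "exp t \<le> exp (1.79::real)" using t by simp
  hence "exp t * c \<le> exp 1.79 * c" using c0 by (rule mult_right_mono)
  hence A: "exp (1.79::real) * (1 - c) \<le> P"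
    using e by (simp add: algebra_simps)
  have Pv: "P = 1 + 179/100 + 179^2/(2*100^2) + 179^3/(6*100^3) + 179^4/(24*100^4) + 179^5/(120*100^5) + 179^6/(720*100^6) + 179^7/(5040*100^7) + 179^8/(40320*100^8) + 179^9/(362880*100^9)"
    unfolding P_def by (simp add: eval_nat_numeral fact_Suc power_divide)
  have cv: "c = 179 ^ 10 / (3628800 * 100^10)" unfolding c_def by (simp add: eval_nat_numeral fact_Suc power_divide)
  have B: "P \<le> (1 + 1.79 + 1.79^2) * (1 - c)"
    unfolding Pv cv by (simp add: power_divide)
  have C: "0 < 1 - c" unfolding cv by (simp add: power_divide)
  have "exp (1.79::real) * (1 - c) \<le> (1 + 1.79 + 1.79^2) * (1 - c)" using A B by linarith
  thus ?thesis using C by (simp add: mult_le_cancel_right)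
qed

lemma H_deriv: "((\<lambda>t::real. (1 - t + t^2) * exp t) has_derivative (\<lambda>h. exp x * (x + x^2) * h)) (at x within S)"
proof -
  have "((\<lambda>t::real. (1 - t + t^2) * exp t) has_real_derivative ((-1 + 2*x) * exp x + (1 - x + x^2) * exp x)) (at x within S)"
    by (auto intro!: derivative_eq_intros)
  moreover have "(-1 + 2*x) * exp x + (1 - x + x^2) * exp x = exp x * (x + x^2)" by (simp add: algebra_simps power2_eq_square)
  ultimately show ?thesis by (simp add: has_field_derivative_def)
qed

lemma exp_ineq:
  fixes t :: real assumes "t \<ge> -1.79"
  shows "exp (-t) \<le> 1 - t + t^2"
proof -
  define H where "H = (\<lambda>t::real. (1 - t + t^2) * exp t)"
  have D: "\<And>x S. (H has_derivative (\<lambda>h. exp x * (x + x^2) * h)) (at x within S)"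
    unfolding H_def by (rule H_deriv)
  have H0: "H 0 = 1" unfolding H_def by simp
  have "H t \<ge> 1"
  proof (cases "t \<ge> 0")
    case True
    obtain y where "y \<in> {0..t}" and "H t - H 0 = exp y * (y + y^2) * (t - 0)"
      using mvt_very_simple[of 0 t H, OF True D] by auto
    moreover have "exp y * (y + y^2) * (t - 0) \<ge> 0" using True \<open>y \<in> {0..t}\<close> by auto
    ultimately show ?thesis using H0 by linarith
  next
    case False
    show ?thesis
    proof (cases "t \<ge> -1")
      case True
      obtain y where y: "y \<in> {t..0}" and "H 0 - H t = exp y * (y + y^2) * (0 - t)"
        using mvt_very_simple[of t 0 H, OF _ D] False by auto
      moreover have "y + y^2 \<le> 0"
      proof -
        have "y * (1 + y) \<le> 0" using y True by (intro mult_nonpos_nonneg) auto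
        thus ?thesis by (simp add: power2_eq_square algebra_simps)
      qed
      moreover have "exp y * (y + y^2) * (0 - t) \<le> 0" 
        using False calculation(3) by (intro mult_nonpos_nonneg mult_nonneg_nonpos) auto
      ultimately show ?thesis using H0 by linarith
    next
      case False2: False
      obtain y where y: "y \<in> {-1.79..t}" and "H t - H (-1.79) = exp y * (y + y^2) * (t - (-1.79))"
        using mvt_very_simple[of "-1.79" t H, OF assms D] by auto
      moreover have "y + y^2 \<ge> 0"
      proof -
        have "y * (1 + y) \<ge> 0" using y False2 by (intro mult_nonpos_nonpos) auto
        thus ?thesis by (simp add: power2_eq_square algebra_simps)
      qed
      moreover have "exp y * (y + y^2) * (t - (-1.79)) \<ge> 0" using assms calculation(3) by (intro mult_nonneg_nonneg) auto
      moreover have "H (-1.79) \<ge> 1"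
      proof -
        have "exp (1.79::real) * exp (-1.79) = 1" by (simp add: exp_minus)
        hence "1 \<le> (1 + 1.79 + 1.79^2) * exp (-1.79::real)" using exp179
          by (metis exp_gt_zero less_eq_real_def mult_right_mono)
        thus ?thesis unfolding H_def by simp
      qed
      ultimately show ?thesis by linarith
    qed
  qed
  thus ?thesis unfolding H_def by (simp add: exp_minus inverse_eq_divide divide_le_eq)
qed

lemma line_deriv:
  fixes f :: "'a::real_inner \<Rightarrow> real" and g :: "'a \<Rightarrow> 'a"
  assumes grad: "\<And>y. (f has_derivative (\<lambda>h. g y \<bullet> h)) (at y)"
  shows "((\<lambda>t. f (x + t *\<^sub>R d)) has_field_derivative (g (x + t *\<^sub>R d) \<bullet> d)) (at t within S)"
proof -
  have l: "((\<lambda>t. x + t *\<^sub>R d) has_derivative (\<lambda>h. h *\<^sub>R d)) (at t within S)"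
    by (auto intro!: derivative_eq_intros)
  have "((\<lambda>t. f (x + t *\<^sub>R d)) has_derivative (\<lambda>h. g (x + t *\<^sub>R d) \<bullet> (h *\<^sub>R d))) (at t within S)"
    using has_derivative_compose[OF l grad] by simp
  moreover have "(\<lambda>h. g (x + t *\<^sub>R d) \<bullet> (h *\<^sub>R d)) = (*) (g (x + t *\<^sub>R d) \<bullet> d)"
    by (rule ext) (simp add: mult.commute)
  ultimately show ?thesis by (simp add: has_field_derivative_def)
qed

lemma grad_ineq:
  fixes f :: "'a::real_inner \<Rightarrow> real" and g :: "'a \<Rightarrow> 'a"
  assumes conv: "convex_on UNIV f"
    and grad: "\<And>y. (f has_derivative (\<lambda>h. g y \<bullet> h)) (at y)"
  shows "f x + g x \<bullet> (y - x) \<le> f y"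
proof -
  define d where "d = y - x"
  define \<phi> where "\<phi> = (\<lambda>t::real. f (x + t *\<^sub>R d))"
  have cphi: "convex_on UNIV \<phi>"
  proof (rule convex_onI)
    fix t a b :: real assume t: "0 < t" "t < 1"
    have "x + ((1 - t) *\<^sub>R a + t *\<^sub>R b) *\<^sub>R d = (1 - t) *\<^sub>R (x + a *\<^sub>R d) + t *\<^sub>R (x + b *\<^sub>R d)"
      by (simp add: algebra_simps)
    moreover have "f ((1 - t) *\<^sub>R (x + a *\<^sub>R d) + t *\<^sub>R (x + b *\<^sub>R d)) \<le> (1 - t) * f (x + a *\<^sub>R d) + t * f (x + b *\<^sub>R d)"
      using convex_onD[OF conv] t by simp
    ultimately show "\<phi> ((1 - t) *\<^sub>R a + t *\<^sub>R b) \<le> (1 - t) * \<phi> a + t * \<phi> b"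
      unfolding \<phi>_def by simp
  qed simp
  have D: "(\<phi> has_field_derivative (g x \<bullet> d)) (at 0 within UNIV)"
    unfolding \<phi>_def using line_deriv[OF grad, of x d 0 UNIV] by simp
  have "\<phi> 1 - \<phi> 0 \<ge> (g x \<bullet> d) * (1 - 0)"
    by (rule convex_on_imp_above_tangent[OF cphi _ _ _ D]) auto
  thus ?thesis unfolding \<phi>_def d_def by simp
qed

lemma descent:
  fixes f :: "'a::real_inner \<Rightarrow> real" and g :: "'a \<Rightarrow> 'a"
  assumes grad: "\<And>y. (f has_derivative (\<lambda>h. g y \<bullet> h)) (at y)"
    and smooth: "\<And>a b. norm (g a - g b) \<le> L * norm (a - b)"
  shows "f y \<le> f x + g x \<bullet> (y - x) + L / 2 * (norm (y - x))^2"
proof -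
  define d where "d = y - x"
  define \<psi> where "\<psi> = (\<lambda>t::real. f (x + t *\<^sub>R d) - t * (g x \<bullet> d) - L / 2 * t^2 * (norm d)^2)"
  define \<psi>' where "\<psi>' = (\<lambda>t::real. g (x + t *\<^sub>R d) \<bullet> d - g x \<bullet> d - L * t * (norm d)^2)"
  have D: "(\<psi> has_derivative (\<lambda>h. \<psi>' t * h)) (at t within {0..1})" for t
  proof -
    have "(\<psi> has_field_derivative (g (x + t *\<^sub>R d) \<bullet> d - 1 * (g x \<bullet> d) - L / 2 * (2 * t) * (norm d)^2)) (at t within {0..1})"
      unfolding \<psi>_def
      by (rule derivative_eq_intros line_deriv[OF grad] | simp)+
    moreover have "g (x + t *\<^sub>R d) \<bullet> d - 1 * (g x \<bullet> d) - L / 2 * (2 * t) * (norm d)^2 = \<psi>' t"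
      unfolding \<psi>'_def by simp
    ultimately show ?thesis by (simp add: has_field_derivative_def)
  qed
  obtain \<xi> where xi: "\<xi> \<in> {0..1}" and eq: "\<psi> 1 - \<psi> 0 = \<psi>' \<xi> * (1 - 0)"
    using mvt_very_simple[of 0 1 \<psi> "\<lambda>t h. \<psi>' t * h", OF _ D] by auto
  have "(g (x + \<xi> *\<^sub>R d) - g x) \<bullet> d \<le> norm (g (x + \<xi> *\<^sub>R d) - g x) * norm d"
    by (rule norm_cauchy_schwarz)
  also have "\<dots> \<le> L * norm (\<xi> *\<^sub>R d) * norm d"
    using smooth[of "x + \<xi> *\<^sub>R d" x] by (intro mult_right_mono) auto
  also have "\<dots> = L * \<xi> * (norm d)^2" using xi by (simp add: power2_eq_square)
  finally have "\<psi>' \<xi> \<le> 0" unfolding \<psi>'_def by (simp add: inner_diff_left)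
  hence "\<psi> 1 \<le> \<psi> 0" using eq by simp
  thus ?thesis unfolding \<psi>_def d_def by simp
qed

definition dterm :: "real \<Rightarrow> real \<Rightarrow> real" where
  "dterm a b = (if a = 0 then 0 else a * ln (a / b)) - a + b"

lemma Dh_eq: "Dh x y = (\<Sum>i\<in>UNIV. dterm (x$i) (y$i))"
  unfolding Dh_def dterm_def by simp

lemma dterm_hell:
  assumes z: "z \<ge> 0" and y: "y > 0"
  shows "(sqrt y - sqrt z)^2 \<le> dterm z y"
proof (cases "z = 0")
  case True thus ?thesis using y by (simp add: dterm_def)
next
  case False
  hence zp: "z > 0" using z by simp
  have "ln (sqrt (y/z)) \<le> sqrt (y/z) - 1" using zp y by (intro ln_le_minus_one) auto
  moreover have "ln (y/z) = 2 * ln (sqrt (y/z))" using zp y by (simp add: ln_sqrt)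
  ultimately have A: "ln (y/z) \<le> 2 * sqrt (y/z) - 2" by simp
  have "ln (z/y) = - ln (y/z)" using zp y by (simp add: ln_div)
  hence "z * ln (z/y) \<ge> z * (2 - 2 * sqrt (y/z))" using A zp
    by (intro mult_left_mono) auto
  moreover have "z * sqrt (y/z) = sqrt z * sqrt y"
    using zp y by (simp add: real_sqrt_divide field_simps)
  ultimately have "z * ln (z/y) \<ge> 2*z - 2 * (sqrt z * sqrt y)" by (simp add: algebra_simps)
  moreover have "(sqrt y - sqrt z)^2 = y - 2 * (sqrt z * sqrt y) + z"
    using zp y by (simp add: power2_diff algebra_simps)
  ultimately show ?thesis using False by (simp add: dterm_def)
qed

lemma dterm_nonneg: "z \<ge> 0 \<Longrightarrow> y > 0 \<Longrightarrow> dterm z y \<ge> 0"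
  by (metis dterm_hell order_trans zero_le_power2)

lemma dterm_bound:
  assumes z: "z \<ge> 0" and y: "y > 0"
  shows "y \<le> 2 * (dterm z y + z)"
proof -
  have h: "(sqrt y - sqrt z)^2 \<le> dterm z y" by (rule dterm_hell[OF z y])
  define a where "a = sqrt y"
  define b where "b = sqrt z"
  have e: "y = a^2" "z = b^2" using z y by (auto simp: a_def b_def)
  have "2*((a-b)^2 + b^2) - a^2 = (a - 2*b)^2" by (simp add: power2_eq_square algebra_simps)
  moreover have "(a - 2*b)^2 \<ge> 0" by simp
  ultimately have "a^2 \<le> 2*(a-b)^2 + 2*b^2" by (simp add: algebra_simps)
  hence "y \<le> 2 * ((a - b)^2 + z)" using e by simp
  hence "y \<le> 2 * ((sqrt y - sqrt z)^2 + z)" unfolding a_def b_def .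
  moreover have "2 * ((sqrt y - sqrt z)^2 + z) \<le> 2 * (dterm z y + z)" using h by simp
  ultimately show ?thesis by (rule order_trans)
qed

lemma dterm_step:
  assumes z: "z \<ge> 0" and y: "y > 0" and m: "m > 0" and lm: "- ln m \<le> t"
    and mu: "m \<le> 1 - t + t^2"
  shows "dterm z (y * m) \<le> dterm z y + z * t + y * (- t + t^2)"
proof -
  have A: "y * m - y \<le> y * (- t + t^2)"
  proof -
    have "y * m \<le> y * (1 - t + t^2)" using y mu by (intro mult_left_mono) auto
    thus ?thesis by (simp add: algebra_simps)
  qed
  show ?thesis
  proof (cases "z = 0")
    case True thus ?thesis using A by (simp add: dterm_def)
  next
    case False
    hence zp: "z > 0" using z by simp
    have hl: "ln (z / (y*m)) = ln (z/y) - ln m" using zp y m by (simp add: ln_div ln_mult)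
    have "z * ln (z / (y*m)) = z * ln (z/y) + z * (- ln m)" unfolding hl by (simp add: algebra_simps)
    moreover have "z * (- ln m) \<le> z * t" using zp lm by (intro mult_left_mono) auto
    ultimately show ?thesis using A False by (simp add: dterm_def)
  qed
qed

lemma Dh_step:
  fixes x z :: "real^'n" and m t :: "'n \<Rightarrow> real"
  assumes z: "\<And>i. z$i \<ge> 0" and x: "\<And>i. x$i > 0"
    and m: "\<And>i. m i > 0" and lm: "\<And>i. - ln (m i) \<le> t i" and mu: "\<And>i. m i \<le> 1 - t i + (t i)^2"
  shows "Dh z (\<chi> i. x$i * m i) \<le> Dh z x + (\<Sum>i\<in>UNIV. z$i * t i + x$i * (- t i + (t i)^2))"
proof -
  have "Dh z (\<chi> i. x$i * m i) = (\<Sum>i\<in>UNIV. dterm (z$i) (x$i * m i))" by (simp add: Dh_eq)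
  also have "\<dots> \<le> (\<Sum>i\<in>UNIV. dterm (z$i) (x$i) + (z$i * t i + x$i * (- t i + (t i)^2)))"
  proof (rule sum_mono)
    fix i
    show "dterm (z$i) (x$i * m i) \<le> dterm (z$i) (x$i) + (z$i * t i + x$i * (- t i + (t i)^2))"
      using dterm_step[of "z$i" "x$i" "m i" "t i"] z[of i] x[of i] m[of i] lm[of i] mu[of i] by linarith
  qed
  also have "\<dots> = Dh z x + (\<Sum>i\<in>UNIV. z$i * t i + x$i * (- t i + (t i)^2))"
    by (simp add: Dh_eq sum.distrib)
  finally show ?thesis .
qed

lemma step_generic:
  fixes x z G :: "real^'n" and a :: real
  assumes z: "\<And>i. z$i \<ge> 0" and x: "\<And>i. x$i > 0"
    and m: "\<And>i. m i > 0" and lm: "\<And>i. - ln (m i) \<le> a * G$i" and mu: "\<And>i. m i \<le> 1 - a * G$i + (a * G$i)^2"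
  shows "Dh z (\<chi> i. x$i * m i) \<le> Dh z x + a * (G \<bullet> (z - x)) + a^2 * wnorm2 x G"
proof -
  have "Dh z (\<chi> i. x$i * m i) \<le> Dh z x + (\<Sum>i\<in>UNIV. z$i * (a * G$i) + x$i * (- (a * G$i) + (a * G$i)^2))"
    by (rule Dh_step[OF z x m lm mu])
  also have "(\<Sum>i\<in>UNIV. z$i * (a * G$i) + x$i * (- (a * G$i) + (a * G$i)^2)) = (\<Sum>i\<in>UNIV. a * (G$i * (z - x)$i) + a^2 * (x$i * (G$i)^2))"
    by (rule sum.cong) (simp_all add: algebra_simps power2_eq_square)
  also have "\<dots> = a * (\<Sum>i\<in>UNIV. G$i * (z - x)$i) + a^2 * (\<Sum>i\<in>UNIV. x$i * (G$i)^2)"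
    by (simp add: sum.distrib sum_distrib_left)
  also have "\<dots> = a * (G \<bullet> (z - x)) + a^2 * wnorm2 x G"
    by (simp add: inner_vec_def wnorm2_def)
  finally show ?thesis by simp
qed

lemma step_emd:
  fixes x z G :: "real^'n" and a :: real
  assumes z: "\<And>i. z$i \<ge> 0" and x: "\<And>i. x$i > 0" and a: "a \<ge> 0" and aG: "a * infnorm G \<le> 1.79"
  shows "(\<forall>i. emd_update a x G $ i > 0) \<and>
    Dh z (emd_update a x G) \<le> Dh z x + a * (G \<bullet> (z - x)) + a^2 * wnorm2 x G"
proof
  show "\<forall>i. emd_update a x G $ i > 0" using x by (simp add: emd_update_def)
  have t: "a * G$i \<ge> -1.79" for i
  proof -
    have "\<bar>G$i\<bar> \<le> infnorm G" by (rule component_le_infnorm_cart)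
    hence "a * \<bar>G$i\<bar> \<le> a * infnorm G" by (rule mult_left_mono[OF _ a])
    moreover have "a * (- \<bar>G$i\<bar>) \<le> a * G$i" by (rule mult_left_mono[OF _ a]) simp
    ultimately show ?thesis using aG by linarith
  qed
  show "Dh z (emd_update a x G) \<le> Dh z x + a * (G \<bullet> (z - x)) + a^2 * wnorm2 x G"
    unfolding emd_update_def
    by (rule step_generic[OF z x]) (auto intro: exp_ineq[OF t])
qed

lemma step_hdp:
  fixes x z G :: "real^'n" and a :: real
  assumes z: "\<And>i. z$i \<ge> 0" and x: "\<And>i. x$i > 0" and a: "a \<ge> 0" and aG: "a * infnorm G \<le> 1.79"
  shows "(\<forall>i. hdp_update a x G $ i > 0) \<and>
    Dh z (hdp_update a x G) \<le> Dh z x + a * (G \<bullet> (z - x)) + a^2 * wnorm2 x G"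
proof
  have pos: "1 - s + s^2 > 0" for s :: real
  proof -
    have "1 - s + s^2 = (s - 1/2)^2 + 3/4" by (simp add: power2_eq_square algebra_simps)
    thus ?thesis using zero_le_power2[of "s - 1/2"] by linarith
  qed
  show "\<forall>i. hdp_update a x G $ i > 0"
  proof
    fix i
    have "0 < 1 - a*G$i + (a*G$i)^2" by (rule pos)
    thus "hdp_update a x G $ i > 0" using x[of i] by (simp add: hdp_update_def power_mult_distrib)
  qed
  have t: "a * G$i \<ge> -1.79" for i
  proof -
    have "\<bar>G$i\<bar> \<le> infnorm G" by (rule component_le_infnorm_cart)
    hence "a * \<bar>G$i\<bar> \<le> a * infnorm G" by (rule mult_left_mono[OF _ a])
    moreover have "a * (- \<bar>G$i\<bar>) \<le> a * G$i" by (rule mult_left_mono[OF _ a]) simp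
    ultimately show ?thesis using aG by linarith
  qed
  have lm: "- ln (1 - a * G$i + (a * G$i)^2) \<le> a * G$i" for i
  proof -
    have "exp (- (a * G$i)) \<le> 1 - a * G$i + (a * G$i)^2" by (rule exp_ineq[OF t])
    hence "ln (exp (- (a * G$i))) \<le> ln (1 - a * G$i + (a * G$i)^2)"
      using pos by (subst ln_le_cancel_iff) auto
    thus ?thesis by simp
  qed
  have "Dh z (\<chi> i. x$i * (1 - a * G$i + (a * G$i)^2)) \<le> Dh z x + a * (G \<bullet> (z - x)) + a^2 * wnorm2 x G"
    by (rule step_generic[OF z x]) (auto intro: pos lm)
  thus "Dh z (hdp_update a x G) \<le> Dh z x + a * (G \<bullet> (z - x)) + a^2 * wnorm2 x G"
    by (simp add: hdp_update_def power_mult_distrib)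
qed

lemma Dh_nonneg:
  fixes w y :: "real^'n"
  assumes "\<And>i. w$i \<ge> 0" "\<And>i. y$i > 0"
  shows "Dh w y \<ge> 0"
  unfolding Dh_eq by (intro sum_nonneg dterm_nonneg assms)

lemma norm1_bound:
  fixes w y :: "real^'n"
  assumes w: "\<And>i. w$i \<ge> 0" and y: "\<And>i. y$i > 0"
  shows "norm1 y \<le> 2 * (Dh w y + norm1 w)"
proof -
  have "norm1 y = (\<Sum>i\<in>UNIV. y$i)" unfolding norm1_def using y
    by (intro sum.cong) (auto simp: less_imp_le)
  also have "\<dots> \<le> (\<Sum>i\<in>UNIV. 2 * (dterm (w$i) (y$i) + w$i))"
    by (intro sum_mono dterm_bound w y)
  also have "\<dots> = 2 * (Dh w y + (\<Sum>i\<in>UNIV. w$i))"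
    by (simp add: Dh_eq sum_distrib_left sum.distrib)
  also have "(\<Sum>i\<in>UNIV. w$i) = norm1 w" unfolding norm1_def using w
    by (intro sum.cong) auto
  finally show ?thesis .
qed

lemma hell_comp:
  fixes w y :: "real^'n"
  assumes w: "\<And>i. w$i \<ge> 0" and y: "\<And>i. y$i > 0"
  shows "(sqrt (y$i) - sqrt (w$i))^2 \<le> Dh w y"
proof -
  have "(sqrt (y$i) - sqrt (w$i))^2 \<le> dterm (w$i) (y$i)" by (rule dterm_hell[OF w y])
  also have "\<dots> \<le> (\<Sum>j\<in>UNIV. dterm (w$j) (y$j))"
    by (rule member_le_sum) (auto intro: dterm_nonneg w y)
  finally show ?thesis by (simp add: Dh_eq)
qed

lemma dterm_self: "a \<ge> 0 \<Longrightarrow> dterm a a = 0"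
  by (simp add: dterm_def)

lemma dterm_cont:
  assumes X: "X \<longlonglongrightarrow> a" and a: "a \<ge> 0"
  shows "(\<lambda>j. dterm a (X j)) \<longlonglongrightarrow> 0"
proof (cases "a = 0")
  case True
  thus ?thesis using X by (simp add: dterm_def)
next
  case False
  have "(\<lambda>j. a * ln (a / X j) - a + X j) \<longlonglongrightarrow> a * ln (a / a) - a + a"
    using False X by (intro tendsto_intros) auto
  thus ?thesis using False by (simp add: dterm_def)
qed

lemma wnorm_pos:
  fixes y G :: "real^'n"
  assumes y: "\<And>i. y$i > 0" and G: "G \<noteq> 0"
  shows "wnorm2 y G > 0"
proof -
  obtain i where "G$i \<noteq> 0" using G by (metis vec_eq_iff zero_index)
  hence "y$i * (G$i)^2 > 0" using y[of i] by simp
  thus ?thesis unfolding wnorm2_def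
    by (intro sum_pos2[of UNIV i]) (auto intro!: mult_nonneg_nonneg less_imp_le[OF y])
qed

lemma wnorm_le:
  fixes y G :: "real^'n"
  assumes y: "\<And>i. y$i > 0"
  shows "wnorm2 y G \<le> norm1 y * (norm G)^2"
proof -
  have "wnorm2 y G \<le> (\<Sum>i\<in>UNIV. y$i * (norm G)^2)" unfolding wnorm2_def
  proof (rule sum_mono)
    fix i
    have "\<bar>G$i\<bar> \<le> norm G" by (rule component_le_norm_cart)
    hence "\<bar>G$i\<bar>^2 \<le> (norm G)^2" by (intro power_mono) auto
    thus "y$i * (G$i)^2 \<le> y$i * (norm G)^2" using y[of i] by (intro mult_left_mono) auto
  qed
  also have "\<dots> = norm1 y * (norm G)^2" unfolding norm1_def sum_distrib_right using y
    by (intro sum.cong) (auto simp: less_imp_le)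
  finally show ?thesis .
qed

lemma norm_le_norm1: "norm (v::real^'n) \<le> norm1 v"
  unfolding norm1_def by (rule norm_le_l1_cart)

theorem mainTheorem9:
  fixes f :: "real^'n \<Rightarrow> real" and g :: "real^'n \<Rightarrow> real^'n"
    and L :: real and z x0 :: "real^'n" and x :: "nat \<Rightarrow> real^'n"
  assumes conv: "convex_on UNIV f"
    and grad: "\<And>y. (f has_derivative (\<lambda>h. g y \<bullet> h)) (at y)"
    and smooth: "\<And>a b. norm (g a - g b) \<le> L * norm (a - b)"
    and z_nonneg: "\<And>i. z$i \<ge> 0"
    and z_min: "\<And>y. f z \<le> f y"
    and x0_pos: "\<And>i. x0$i > 0"
    and x_0: "x 0 = x0"
    and iter:
      "(\<forall>k. x (Suc k) = (if g (x k) = 0 then x k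
              else emd_update (step_size (f (x k)) (f z) (x k) (g (x k))) (x k) (g (x k))))
     \<or> (\<forall>k. x (Suc k) = (if g (x k) = 0 then x k
              else hdp_update (step_size (f (x k)) (f z) (x k) (g (x k))) (x k) (g (x k))))"
  shows "bounded (range x)
    \<and> (\<forall>k. g (x k) \<noteq> 0 \<longrightarrow>
          step_size (f (x k)) (f z) (x k) (g (x k)) \<ge> 1 / (8 * L * (Dh z x0 + norm1 z)))
    \<and> (\<forall>k. Min ((\<lambda>i. f (x i)) ` {..k}) - f z
          \<le> 16 * L * Dh z x0 * (Dh z x0 + norm1 z) / (real k + 1))
    \<and> (\<exists>xs. x \<longlonglongrightarrow> xs \<and> (\<forall>i. xs$i \<ge> 0) \<and> (\<forall>y. f xs \<le> f y))"
proof -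
  have gi: "\<And>a b. f a + g a \<bullet> (b - a) \<le> f b" using grad_ineq[OF conv grad] .
  have gz: "g z = 0"
  proof -
    have "(\<lambda>h. g z \<bullet> h) = (\<lambda>h. 0)"
      by (rule has_derivative_local_min[OF grad]) (simp add: z_min always_eventually)
    hence "g z \<bullet> g z = 0" by metis
    thus ?thesis by simp
  qed
  have fmin: "f a = f z" if "g a = 0" for a
  proof -
    have "f a \<le> f z" using gi[of a z] that by simp
    thus ?thesis using z_min[of a] by simp
  qed
  have L0: "L \<ge> 0"
  proof -
    define o1 where "o1 = ((\<chi> i. 1) :: real^'n)"
    have "o1 \<noteq> 0" unfolding o1_def by (metis one_neq_zero vec_lambda_beta zero_index)
    hence np: "norm (0 - o1) > 0" by simp
    have "0 \<le> L * norm (0 - o1)" using smooth[of 0 o1] norm_ge_zero order_trans by blast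
    thus ?thesis using np by (simp add: zero_le_mult_iff)
  qed
  define D0 where "D0 = Dh z x0"
  define Z where "Z = norm1 z"
  define R where "R = D0 + Z"
  define st where "st = (\<lambda>k. step_size (f (x k)) (f z) (x k) (g (x k)))"
  obtain upd where upd_it: "\<And>k. x (Suc k) = (if g (x k) = 0 then x k else upd (st k) (x k) (g (x k)))"
    and upd_p: "\<And>a y G w. (\<And>i. w$i \<ge> 0) \<Longrightarrow> (\<And>i. y$i > 0) \<Longrightarrow> a \<ge> 0 \<Longrightarrow> a * infnorm G \<le> 1.79 \<Longrightarrow>
       (\<forall>i. upd a y G $ i > 0) \<and> Dh w (upd a y G) \<le> Dh w y + a * (G \<bullet> (w - y)) + a^2 * wnorm2 y G"
  proof (rule disjE[OF iter])
    assume h: "\<forall>k. x (Suc k) = (if g (x k) = 0 then x k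
              else emd_update (step_size (f (x k)) (f z) (x k) (g (x k))) (x k) (g (x k)))"
    show thesis
      by (rule that[of emd_update]) (use h in \<open>simp add: st_def\<close>, (rule step_emd; assumption))
  next
    assume h: "\<forall>k. x (Suc k) = (if g (x k) = 0 then x k
              else hdp_update (step_size (f (x k)) (f z) (x k) (g (x k))) (x k) (g (x k)))"
    show thesis
      by (rule that[of hdp_update]) (use h in \<open>simp add: st_def\<close>, (rule step_hdp; assumption))
  qed
  have D0nn: "D0 \<ge> 0" unfolding D0_def by (rule Dh_nonneg[OF z_nonneg x0_pos])
  have Zr: "Z \<le> R" unfolding R_def using D0nn by simp
  show ?thesis
  proof (cases "L = 0")
    case True
    have gall: "g a = 0" for a using smooth[of a z] True gz by simp
    have xs: "x (Suc k) = x k" for k using upd_it[of k] gall by simp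
    have xc: "x k = x0" for k by (induction k) (auto simp: x_0 xs)
    have fx0: "f x0 = f z" using fmin gall by blast
    have "range x = {x0}" using xc by auto
    hence b: "bounded (range x)" by simp
    have m: "Min ((\<lambda>i. f (x i)) ` {..k}) = f z" for k
    proof -
      have "(\<lambda>i. f (x i)) ` {..k} = {f z}" using xc fx0 by auto
      thus ?thesis by simp
    qed
    have "x = (\<lambda>k. x0)" using xc by auto
    hence lim: "x \<longlonglongrightarrow> x0" by simp
    have "\<exists>xs. x \<longlonglongrightarrow> xs \<and> (\<forall>i. xs$i \<ge> 0) \<and> (\<forall>y. f xs \<le> f y)"
      using lim x0_pos fx0 z_min by (intro exI[of _ x0]) (auto simp: less_imp_le)
    thus ?thesis
      using b gall m True by auto
  next
    case False
    hence Lp: "L > 0" using L0 by simp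
    have stp: "0 \<le> step_size (f y) (f z) y (g y) \<and> step_size (f y) (f z) y (g y) * wnorm2 y (g y) \<le> (f y - f z) / 2
       \<and> step_size (f y) (f z) y (g y) * infnorm (g y) \<le> 1.79" if y: "\<And>i. y$i > 0" and G: "g y \<noteq> 0" for y
    proof -
      define a where "a = step_size (f y) (f z) y (g y)"
      have W: "wnorm2 y (g y) > 0" by (rule wnorm_pos[OF y G])
      have I: "infnorm (g y) > 0" using G infnorm_pos_lt by blast
      have F: "f y - f z \<ge> 0" using z_min[of y] by simp
      have a1: "a \<le> (f y - f z) / (2 * wnorm2 y (g y))" unfolding a_def step_size_def by simp
      have a2: "a \<le> 1.79 / infnorm (g y)" unfolding a_def step_size_def by simp
      have a0: "a \<ge> 0" unfolding a_def step_size_def using W I F by simp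
      have "a * (2 * wnorm2 y (g y)) \<le> f y - f z" using a1 W by (simp add: pos_le_divide_eq)
      moreover have "a * infnorm (g y) \<le> 1.79" using a2 I by (simp add: pos_le_divide_eq)
      ultimately show ?thesis using a0 unfolding a_def[symmetric] by simp
    qed
    have posx: "\<forall>i. x k $ i > 0" for k
    proof (induction k)
      case 0 show ?case using x0_pos x_0 by simp
    next
      case (Suc k)
      show ?case
      proof (cases "g (x k) = 0")
        case True thus ?thesis using Suc upd_it[of k] by simp
      next
        case False
        have s: "st k \<ge> 0" "st k * infnorm (g (x k)) \<le> 1.79" using stp[of "x k"] Suc False unfolding st_def by auto
        have "\<forall>i. upd (st k) (x k) (g (x k)) $ i > 0" using upd_p[OF z_nonneg _ s] Suc by blast
        thus ?thesis using upd_it[of k] False by simp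
      qed
    qed
    define e where "e = (\<lambda>k. if g (x k) = 0 then 0 else st k * (f (x k) - f z) / 2)"
    have e0: "e k \<ge> 0" for k
    proof (cases "g (x k) = 0")
      case False
      have "st k \<ge> 0" using stp[of "x k"] posx False unfolding st_def by auto
      thus ?thesis using False z_min[of "x k"] unfolding e_def by simp
    qed (simp add: e_def)
    have fej: "Dh w (x (Suc k)) \<le> Dh w (x k) - e k" if w: "\<And>i. w$i \<ge> 0" and fw: "f w = f z" for w k
    proof (cases "g (x k) = 0")
      case True thus ?thesis using upd_it[of k] by (simp add: e_def)
    next
      case False
      define a where "a = st k"
      define y where "y = x k"
      define G where "G = g y"
      define W where "W = wnorm2 y G"
      have ypos: "\<And>i. y$i > 0" unfolding y_def using posx by blast
      have s: "a \<ge> 0" "a * infnorm G \<le> 1.79" "a * W \<le> (f y - f z) / 2"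
        using stp[of y] ypos False unfolding a_def st_def y_def G_def W_def by auto
      have U: "Dh w (upd a y G) \<le> Dh w y + a * (G \<bullet> (w - y)) + a^2 * W"
        using upd_p[OF w ypos s(1,2)] unfolding W_def by blast
      have "G \<bullet> (w - y) \<le> f z - f y" using gi[of y w] fw unfolding G_def by simp
      hence t1: "a * (G \<bullet> (w - y)) \<le> a * (f z - f y)" using s(1) by (rule mult_left_mono)
      have t2: "a^2 * W \<le> a * ((f y - f z) / 2)" using mult_left_mono[OF s(3) s(1)]
        by (simp add: power2_eq_square mult.assoc)
      have "a * (f z - f y) + a * ((f y - f z) / 2) = - (a * (f y - f z) / 2)" by (simp add: algebra_simps)
      hence "Dh w (upd a y G) \<le> Dh w y - a * (f y - f z) / 2" using U t1 t2 by linarith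
      thus ?thesis using upd_it[of k] False unfolding e_def a_def y_def G_def by simp
    qed
    have Dsum: "Dh z (x k) + (\<Sum>i<k. e i) \<le> D0" for k
    proof (induction k)
      case 0 show ?case by (simp add: x_0 D0_def)
    next
      case (Suc k)
      have "Dh z (x (Suc k)) \<le> Dh z (x k) - e k" by (rule fej[OF z_nonneg refl])
      thus ?case using Suc by simp
    qed
    have Dnn: "Dh w (x k) \<ge> 0" if "\<And>i. w$i \<ge> 0" for w k
      using Dh_nonneg[OF that] posx by blast
    have Dle: "Dh z (x k) \<le> D0" for k using Dsum[of k] sum_nonneg[of "{..<k}" e] e0 by fastforce
    have esum: "(\<Sum>i<k. e i) \<le> D0" for k using Dsum[of k] Dnn[OF z_nonneg, of k] by linarith
    have nx: "norm1 (x k) \<le> 2 * R" for k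
      using norm1_bound[OF z_nonneg, of "x k"] posx Dle[of k] unfolding R_def Z_def by fastforce
    have Rp: "R > 0"
    proof -
      have "norm1 x0 > 0" unfolding norm1_def using x0_pos by (intro sum_pos) (auto simp: less_imp_le)
      moreover have "norm1 x0 \<le> 2 * R" using nx[of 0] x_0 by simp
      ultimately show ?thesis by simp
    qed
    have bnd: "bounded (range x)"
      by (rule boundedI[where B = "2*R"]) (use norm_le_norm1 nx order_trans in blast)
    define c where "c = 1 / (8 * L * R)"
    have cp: "c > 0" unfolding c_def using Lp Rp by simp
    have stLB: "c \<le> st k" if G0: "g (x k) \<noteq> 0" for k
    proof -
      define y where "y = x k"
      define G where "G = g y"
      have ypos: "\<And>i. y$i > 0" unfolding y_def using posx by blast
      have G0': "G \<noteq> 0" using G0 unfolding G_def y_def by simp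
      define n2 where "n2 = (norm G)^2"
      have gap: "f y - f z \<ge> n2 / (2 * L)"
      proof -
        have d: "f (y - (1/L) *\<^sub>R G) \<le> f y + G \<bullet> ((y - (1/L) *\<^sub>R G) - y) + L / 2 * (norm ((y - (1/L) *\<^sub>R G) - y))^2"
          using descent[OF grad smooth] unfolding G_def by blast
        have e1: "G \<bullet> ((y - (1/L) *\<^sub>R G) - y) = - n2 / L"
          unfolding n2_def by (simp add: power2_norm_eq_inner)
        have e2: "L / 2 * (norm ((y - (1/L) *\<^sub>R G) - y))^2 = n2 / (2 * L)"
          unfolding n2_def using Lp by (simp add: power2_eq_square field_simps)
        have "- n2 / L + n2 / (2 * L) = - (n2 / (2 * L))" using Lp by (simp add: field_simps)
        thus ?thesis using d e1 e2 z_min[of "y - (1/L) *\<^sub>R G"] by linarith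
      qed
      have Wp: "wnorm2 y G > 0" by (rule wnorm_pos[OF ypos G0'])
      have Wl: "wnorm2 y G \<le> 2 * R * n2"
      proof -
        have "wnorm2 y G \<le> norm1 y * n2" unfolding n2_def by (rule wnorm_le[OF ypos])
        also have "\<dots> \<le> 2 * R * n2" unfolding n2_def using nx[of k] unfolding y_def by (intro mult_right_mono) auto
        finally show ?thesis .
      qed
      have A: "c \<le> (f y - f z) / (2 * wnorm2 y G)"
      proof -
        have "c * (2 * wnorm2 y G) \<le> c * (2 * (2 * R * n2))" using Wl cp by simp
        also have "\<dots> = n2 / (2 * L)" unfolding c_def using Lp Rp by (simp add: field_simps)
        finally show ?thesis using gap Wp by (simp add: pos_le_divide_eq)
      qed
      have Ip: "infnorm G > 0" using G0' infnorm_pos_lt by blast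
      have B: "c \<le> 1.79 / infnorm G"
      proof -
        have "infnorm G \<le> norm G" by (rule infnorm_le_norm)
        also have "\<dots> = norm (G - g z)" using gz by simp
        also have "\<dots> \<le> L * norm (y - z)" unfolding G_def by (rule smooth)
        also have "\<dots> \<le> L * (norm1 y + Z)"
        proof -
          have "norm (y - z) \<le> norm y + norm z" by (rule norm_triangle_ineq4)
          also have "\<dots> \<le> norm1 y + Z" unfolding Z_def using norm_le_norm1[of y] norm_le_norm1[of z] by simp
          finally show ?thesis using Lp by simp
        qed
        also have "\<dots> \<le> L * (3 * R)" using nx[of k] Zr Lp unfolding y_def by simp
        finally have "c * infnorm G \<le> c * (L * (3 * R))" using cp by simp
        also have "\<dots> = 3 / 8" unfolding c_def using Lp Rp by (simp add: field_simps)
        finally show ?thesis using Ip by (simp add: pos_le_divide_eq)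
      qed
      show ?thesis using A B unfolding st_def step_size_def y_def G_def by simp
    qed
    have elb: "c * (f (x k) - f z) / 2 \<le> e k" for k
    proof (cases "g (x k) = 0")
      case True thus ?thesis using fmin unfolding e_def by simp
    next
      case False
      have "c * (f (x k) - f z) \<le> st k * (f (x k) - f z)"
        using stLB[OF False] z_min[of "x k"] by (intro mult_right_mono) auto
      thus ?thesis using False unfolding e_def by simp
    qed
    have sumb: "c / 2 * (\<Sum>i\<le>k. f (x i) - f z) \<le> D0" for k
    proof -
      have "c / 2 * (\<Sum>i\<le>k. f (x i) - f z) = (\<Sum>i\<le>k. c * (f (x i) - f z) / 2)"
        by (simp add: sum_distrib_left sum_divide_distrib)
      also have "\<dots> \<le> (\<Sum>i\<le>k. e i)" by (intro sum_mono elb)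
      also have "\<dots> = (\<Sum>i<Suc k. e i)" by (simp add: lessThan_Suc_atMost)
      also have "\<dots> \<le> D0" by (rule esum)
      finally show ?thesis .
    qed
    have minb: "Min ((\<lambda>i. f (x i)) ` {..k}) - f z \<le> 16 * L * D0 * R / (real k + 1)" for k
    proof -
      define M where "M = Min ((\<lambda>i. f (x i)) ` {..k})"
      have Mle: "M \<le> f (x i)" if "i \<le> k" for i unfolding M_def using that by (intro Min_le) auto
      have "(real k + 1) * (M - f z) = (\<Sum>i\<le>k. M - f z)" by simp
      also have "\<dots> \<le> (\<Sum>i\<le>k. f (x i) - f z)" using Mle by (intro sum_mono) auto
      finally have "c / 2 * ((real k + 1) * (M - f z)) \<le> c / 2 * (\<Sum>i\<le>k. f (x i) - f z)"
        using cp by (intro mult_left_mono) auto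
      hence h: "c / 2 * ((real k + 1) * (M - f z)) \<le> D0" using sumb[of k] by linarith
      have "(M - f z) * (real k + 1) = (16 * L * R) * (c / 2 * ((real k + 1) * (M - f z)))"
        unfolding c_def using Lp Rp by (simp add: field_simps)
      also have "\<dots> \<le> (16 * L * R) * D0" using h Lp Rp by (intro mult_left_mono) auto
      finally have "(M - f z) * (real k + 1) \<le> 16 * L * D0 * R" by (simp add: algebra_simps)
      thus ?thesis unfolding M_def by (simp add: pos_le_divide_eq)
    qed
    have conv_part: "\<exists>xs. x \<longlonglongrightarrow> xs \<and> (\<forall>i. xs$i \<ge> 0) \<and> (\<forall>y. f xs \<le> f y)"
    proof -
      have "summable (\<lambda>i. f (x i) - f z)"
      proof (rule bounded_imp_summable)
        show "\<And>n. 0 \<le> f (x n) - f z" using z_min by simp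
        show "(\<Sum>k\<le>n. f (x k) - f z) \<le> 2 * D0 / c" for n
          using sumb[of n] cp by (simp add: pos_le_divide_eq field_simps)
      qed
      hence "(\<lambda>i. f (x i) - f z) \<longlonglongrightarrow> 0" by (rule summable_LIMSEQ_zero)
      hence ft: "(\<lambda>i. f (x i)) \<longlonglongrightarrow> f z" by (simp add: LIM_zero_iff)
      obtain l r where r: "strict_mono r" and lr: "(x \<circ> r) \<longlonglongrightarrow> l"
        using bounded_imp_convergent_subsequence[OF bnd] by blast
      have lnn: "l$i \<ge> 0" for i
      proof -
        have "(\<lambda>j. (x \<circ> r) j $ i) \<longlonglongrightarrow> l$i" using lr by (rule tendsto_vec_nth)
        moreover have "\<exists>N. \<forall>n\<ge>N. 0 \<le> (x \<circ> r) n $ i" using posx by (auto simp: less_imp_le)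
        ultimately show ?thesis by (rule LIMSEQ_le_const)
      qed
      have fl: "f l = f z"
      proof -
        have "isCont f l" using has_derivative_continuous[OF grad] by (simp add: continuous_at)
        hence "(\<lambda>j. f ((x \<circ> r) j)) \<longlonglongrightarrow> f l" using lr by (rule isCont_tendsto_compose)
        moreover have "((\<lambda>i. f (x i)) \<circ> r) \<longlonglongrightarrow> f z" using ft r by (rule LIMSEQ_subseq_LIMSEQ)
        ultimately show ?thesis by (simp add: comp_def LIMSEQ_unique)
      qed
      have dec: "decseq (\<lambda>k. Dh l (x k))"
        by (rule decseq_SucI) (use fej[OF lnn fl] e0 in \<open>smt (verit)\<close>)
      have sub0: "(\<lambda>j. Dh l (x (r j))) \<longlonglongrightarrow> 0"
      proof -
        have "(\<lambda>j. \<Sum>i\<in>UNIV. dterm (l$i) (x (r j) $ i)) \<longlonglongrightarrow> 0"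
        proof (rule tendsto_null_sum)
          fix i
          have "(\<lambda>j. x (r j) $ i) \<longlonglongrightarrow> l $ i" using tendsto_vec_nth[OF lr, of i] by (simp add: comp_def)
          thus "(\<lambda>j. dterm (l$i) (x (r j) $ i)) \<longlonglongrightarrow> 0" by (rule dterm_cont[OF _ lnn])
        qed
        thus ?thesis by (simp add: Dh_eq)
      qed
      have Dl: "(\<lambda>k. Dh l (x k)) \<longlonglongrightarrow> 0"
      proof -
        obtain L' where L': "(\<lambda>k. Dh l (x k)) \<longlonglongrightarrow> L'"
          using decseq_convergent[OF dec, of 0] Dnn[OF lnn] by blast
        have "((\<lambda>k. Dh l (x k)) \<circ> r) \<longlonglongrightarrow> L'" using L' r by (rule LIMSEQ_subseq_LIMSEQ)
        hence "L' = 0" using sub0 by (simp add: comp_def LIMSEQ_unique)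
        thus ?thesis using L' by simp
      qed
      have comp: "(\<lambda>k. x k $ i) \<longlonglongrightarrow> l $ i" for i
      proof -
        have "(\<lambda>k. sqrt (x k $ i) - sqrt (l$i)) \<longlonglongrightarrow> 0"
        proof (rule Lim_null_comparison)
          show "\<forall>\<^sub>F k in sequentially. norm (sqrt (x k $ i) - sqrt (l$i)) \<le> sqrt (Dh l (x k))"
          proof (rule always_eventually, rule allI)
            fix k
            have "(sqrt (x k $ i) - sqrt (l$i))^2 \<le> Dh l (x k)"
              using hell_comp[OF lnn, of "x k" i] posx by blast
            hence "sqrt ((sqrt (x k $ i) - sqrt (l$i))^2) \<le> sqrt (Dh l (x k))" by (rule real_sqrt_le_mono)
            thus "norm (sqrt (x k $ i) - sqrt (l$i)) \<le> sqrt (Dh l (x k))" by simp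
          qed
          show "(\<lambda>k. sqrt (Dh l (x k))) \<longlonglongrightarrow> 0" using tendsto_real_sqrt[OF Dl] by simp
        qed
        hence "(\<lambda>k. sqrt (x k $ i)) \<longlonglongrightarrow> sqrt (l$i)" by (simp add: LIM_zero_iff)
        hence "(\<lambda>k. (sqrt (x k $ i))^2) \<longlonglongrightarrow> (sqrt (l$i))^2" by (rule tendsto_power)
        moreover have "(\<lambda>k. (sqrt (x k $ i))^2) = (\<lambda>k. x k $ i)"
          using posx by (auto simp: less_imp_le)
        ultimately show ?thesis using lnn[of i] by simp
      qed
      have "x \<longlonglongrightarrow> l" by (rule vec_tendstoI) (use comp in simp)
      thus ?thesis using lnn fl z_min by auto
    qed
    show ?thesis
      using bnd stLB minb conv_part unfolding st_def c_def R_def D0_def Z_def by auto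
  qed
qed

end
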